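(* Let $0<p,q<\infty$ and let $\mu$ be a $q$-reverse Carleson measure for $H^p(\mathbb{D})$. Let $\nu=\mu|_{\partial\mathbb{D}}$, regarded as a measure on $\mathbb{T}=\partial\mathbb{D}$. Then there is $C>0$ such that $\|f\|_{L^p(\mathbb{T},m)}\le C\|f\|_{L^q(\nu)}$ for every $f\in C(\mathbb{T})$.
   Context: $H^p=H^p(\mathbb{D})$ ($0<p<\infty$) is the space of holomorphic $f$ on the unit disc $\mathbb{D}$ with $\|f\|_{H^p}^p=\sup_{0<r<1}\int_0^1|f(re^{2\pi it})|^p\,dt<\infty$. $m$ is normalized Lebesgue measure on $\mathbb{T}$. For a quasi-Banach space $X$ of analytic functions on $\mathbb{D}$ and $0<q<\infty$, a finite positive Borel measure $\mu$ on $\overline{\mathbb{D}}$ is a $q$-reverse Carleson measure for $X$ if there is $C>0$ with $\|f\|_X\le C\|f\|_{L^q(\overline{\mathbb{D}},\mu)}$ for all $f\in X\cap C(\overline{\mathbb{D}})$. *)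

theory Defs
  imports "HOL-Analysis.Analysis"
begin

definition circle_borel :: "complex measure" where
  "circle_borel = restrict_space borel (sphere 0 1)"

definition circle_measure :: "complex measure" where
  "circle_measure = distr (restrict_space lborel {0..1}) circle_borel (\<lambda>t. cis (2 * pi * t))"

definition Hp_mean :: "real \<Rightarrow> (complex \<Rightarrow> complex) \<Rightarrow> real \<Rightarrow> ennreal" where
  "Hp_mean p f r = (\<integral>\<^sup>+ t \<in> {0..1}. ennreal (norm (f (of_real r * cis (2 * pi * t))) powr p) \<partial>lborel)"

definition Hp_norm_pow :: "real \<Rightarrow> (complex \<Rightarrow> complex) \<Rightarrow> ennreal" where
  "Hp_norm_pow p f = (SUP r \<in> {0<..<1}. Hp_mean p f r)"

definition Hp :: "real \<Rightarrow> (complex \<Rightarrow> complex) set" where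
  "Hp p = {f. f holomorphic_on ball 0 1 \<and> Hp_norm_pow p f < \<infinity>}"

text \<open>The H^p quasi-norm (only used for f in H^p, where it is finite).\<close>
definition Hp_norm :: "real \<Rightarrow> (complex \<Rightarrow> complex) \<Rightarrow> real" where
  "Hp_norm p f = enn2real (Hp_norm_pow p f) powr (1 / p)"

text \<open>The L^q(M) quasi-norm (only used where the integral is finite).\<close>
definition Lq_norm :: "'a measure \<Rightarrow> real \<Rightarrow> ('a \<Rightarrow> complex) \<Rightarrow> real" where
  "Lq_norm M q f = enn2real (\<integral>\<^sup>+ x. ennreal (norm (f x) powr q) \<partial>M) powr (1 / q)"

definition finite_borel_measure_closed_disc :: "complex measure \<Rightarrow> bool" where
  "finite_borel_measure_closed_disc \<mu> \<longleftrightarrow>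
     sets \<mu> = sets (restrict_space borel (cball 0 1)) \<and> finite_measure \<mu>"

definition reverse_carleson_Hp :: "real \<Rightarrow> real \<Rightarrow> complex measure \<Rightarrow> bool" where
  "reverse_carleson_Hp p q \<mu> \<longleftrightarrow> finite_borel_measure_closed_disc \<mu> \<and>
     (\<exists>C>0. \<forall>f. f \<in> Hp p \<and> continuous_on (cball 0 1) f \<longrightarrow>
               Hp_norm p f \<le> C * Lq_norm \<mu> q f)"

end

theory Submission
  imports Defs
begin


lemma space_restrict_borel: "sets M = sets (restrict_space borel S) \<Longrightarrow> space M = S"
  by (metis sets_eq_imp_space_eq space_borel space_restrict_space Int_UNIV_right)

lemma Lq_facts:
  fixes f :: "'a::metric_space \<Rightarrow> complex"
  assumes M: "finite_measure M" and sM: "sets M = sets (restrict_space borel S)"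
    and S: "compact S" and f: "continuous_on S f" and q: "q > 0"
  shows "integrable M (\<lambda>x. norm (f x) powr q)"
    and "(\<integral>\<^sup>+x. ennreal (norm (f x) powr q) \<partial>M) = ennreal (\<integral>x. norm (f x) powr q \<partial>M)"
    and "Lq_norm M q f = (\<integral>x. norm (f x) powr q \<partial>M) powr (1/q)"
proof -
  interpret finite_measure M by fact
  have sp: "space M = S" using space_restrict_borel[OF sM] .
  have cg: "continuous_on S (\<lambda>x. norm (f x) powr q)"
    by (intro continuous_on_powr' continuous_intros f) (use q in auto)
  have meas: "(\<lambda>x. norm (f x) powr q) \<in> borel_measurable M"
    using borel_measurable_continuous_on_restrict[OF cg] measurable_cong_sets[OF sM refl] by blast
  have "compact ((\<lambda>x. norm (f x) powr q) ` S)" by (rule compact_continuous_image[OF cg S])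
  then obtain B where B: "\<And>x. x \<in> S \<Longrightarrow> norm (norm (f x) powr q) \<le> B"
    by (meson bounded_iff compact_imp_bounded image_eqI)
  show int: "integrable M (\<lambda>x. norm (f x) powr q)"
    by (rule integrable_const_bound[where B=B]) (use B sp meas in auto)
  show eq: "(\<integral>\<^sup>+x. ennreal (norm (f x) powr q) \<partial>M) = ennreal (\<integral>x. norm (f x) powr q \<partial>M)"
    by (rule nn_integral_eq_integral[OF int]) auto
  show "Lq_norm M q f = (\<integral>x. norm (f x) powr q \<partial>M) powr (1/q)"
    unfolding Lq_norm_def eq by (simp add: integral_nonneg)
qed


lemma circle_sets: "sets circle_measure = sets (restrict_space borel (sphere (0::complex) 1))"
  by (simp add: circle_measure_def circle_borel_def)

lemma cis_meas: "(\<lambda>t. cis (2 * pi * t)) \<in> restrict_space lborel {0..1} \<rightarrow>\<^sub>M circle_borel"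
  unfolding circle_borel_def
  by (intro measurable_restrict_space2 measurable_restrict_space1)
     (auto intro!: borel_measurable_continuous_onI continuous_intros)

lemma circle_finite: "finite_measure circle_measure"
proof -
  have "finite_measure (restrict_space lborel {0..1::real})"
    by (intro finite_measureI) (simp add: emeasure_restrict_space space_restrict_space)
  then show ?thesis unfolding circle_measure_def by (rule finite_measure.finite_measure_distr[OF _ cis_meas])
qed

lemma circle_nn:
  assumes g: "g \<in> borel_measurable circle_borel"
  shows "(\<integral>\<^sup>+z. g z \<partial>circle_measure) = (\<integral>\<^sup>+t\<in>{0..1}. g (cis (2 * pi * t)) \<partial>lborel)"
proof -
  have "(\<integral>\<^sup>+z. g z \<partial>circle_measure) = (\<integral>\<^sup>+t. g (cis (2 * pi * t)) \<partial>restrict_space lborel {0..1})"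
    unfolding circle_measure_def by (rule nn_integral_distr[OF cis_meas]) (use g in simp)
  also have "\<dots> = (\<integral>\<^sup>+t\<in>{0..1}. g (cis (2 * pi * t)) \<partial>lborel)"
    by (subst nn_integral_restrict_space) auto
  finally show ?thesis .
qed

lemma nu_facts:
  assumes "finite_borel_measure_closed_disc \<mu>"
  shows "finite_measure (restrict_space \<mu> (sphere 0 1))"
    and "sets (restrict_space \<mu> (sphere 0 1)) = sets (restrict_space borel (sphere (0::complex) 1))"
    and "sphere 0 1 \<in> sets \<mu>"
proof -
  have s: "sets \<mu> = sets (restrict_space borel (cball (0::complex) 1))" "finite_measure \<mu>"
    using assms unfolding finite_borel_measure_closed_disc_def by auto
  show T: "sphere 0 1 \<in> sets \<mu>"
    unfolding s(1) sets_restrict_space by (rule image_eqI[where x="sphere 0 1"]) auto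
  show "finite_measure (restrict_space \<mu> (sphere 0 1))"
    by (rule finite_measure_restrict_space[OF s(2) T])
  have "sets (restrict_space \<mu> (sphere 0 1)) = sets (restrict_space (restrict_space borel (cball (0::complex) 1)) (sphere 0 1))"
    by (rule sets_restrict_space_cong[OF s(1)])
  also have "restrict_space (restrict_space borel (cball (0::complex) 1)) (sphere 0 1) = restrict_space borel (cball 0 1 \<inter> sphere 0 1)"
    by (rule restrict_restrict_space) auto
  also have "cball (0::complex) 1 \<inter> sphere 0 1 = sphere 0 1" by auto
  finally show "sets (restrict_space \<mu> (sphere 0 1)) = sets (restrict_space borel (sphere (0::complex) 1))" .
qed




lemma A1:
  fixes F :: "complex \<Rightarrow> complex"
  assumes F: "continuous_on (cball 0 1) F" and p: "p > 0"
  shows "Hp_norm_pow p F < \<infinity>" and "Lq_norm circle_measure p F \<le> Hp_norm p F"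
proof -
  define G where "G z = norm (F z) powr p" for z
  have cG: "continuous_on (cball 0 1) G"
    unfolding G_def by (intro continuous_on_powr' continuous_intros F) (use p in auto)
  have "compact (G ` cball 0 1)" by (rule compact_continuous_image[OF cG]) auto
  then obtain B where B: "\<And>z. z \<in> cball 0 1 \<Longrightarrow> norm (G z) \<le> B"
    by (meson bounded_iff compact_imp_bounded image_eqI)
  have Gnn: "G z \<ge> 0" for z unfolding G_def by simp
  have inball: "of_real r * cis (2 * pi * t) \<in> cball 0 1" if "0 \<le> r" "r \<le> 1" for r t
    using that by (simp add: norm_mult)
  have measG: "(\<lambda>t. ennreal (G (of_real r * cis (2 * pi * t)))) \<in> borel_measurable lborel"
    if "0 \<le> r" "r \<le> 1" for r
  proof -
    have "continuous_on UNIV (\<lambda>t. G (of_real r * cis (2 * pi * t)))"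
      by (rule continuous_on_compose2[OF cG]) (auto intro!: continuous_intros inball that)
    then have "(\<lambda>t. G (of_real r * cis (2 * pi * t))) \<in> borel_measurable borel"
      by (rule borel_measurable_continuous_onI)
    then show ?thesis using measurable_compose[OF _ measurable_ennreal] by simp
  qed
  have mean_eq: "Hp_mean p F r = (\<integral>\<^sup>+ t. ennreal (G (of_real r * cis (2 * pi * t))) * indicator {0..1} t \<partial>lborel)" for r
    unfolding Hp_mean_def G_def by simp
  have upper: "Hp_mean p F r \<le> ennreal B" if "0 \<le> r" "r \<le> 1" for r
  proof -
    have "Hp_mean p F r \<le> (\<integral>\<^sup>+ t. ennreal B * indicator {0..1::real} t \<partial>lborel)"
      unfolding mean_eq
      using B[OF inball[OF that]] by (intro nn_integral_mono) (auto simp: indicator_def intro!: ennreal_leI dest: abs_le_D1)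
    also have "\<dots> = ennreal B" by (subst nn_integral_cmult_indicator) auto
    finally show ?thesis .
  qed
  have "Hp_norm_pow p F \<le> ennreal B"
    unfolding Hp_norm_pow_def by (rule SUP_least) (use upper in auto)
  then show fin: "Hp_norm_pow p F < \<infinity>"
    using order_le_less_trans by fastforce
  have lower: "Hp_mean p F 1 \<le> Hp_norm_pow p F"
  proof (rule ennreal_le_epsilon)
    fix e :: real assume e: "0 < e"
    have "uniformly_continuous_on (cball 0 1) G"
      by (rule compact_uniformly_continuous[OF cG]) auto
    then obtain d where d: "d > 0" and dd: "\<And>x x'. x \<in> cball 0 1 \<Longrightarrow> x' \<in> cball 0 1 \<Longrightarrow> dist x' x < d \<Longrightarrow> dist (G x') (G x) < e"
      unfolding uniformly_continuous_on_def using e by metis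
    define r where "r = max (1/2) (1 - d/2)"
    have r: "0 < r" "r < 1" "1 - r < d" using d by (auto simp: r_def)
    have pt: "ennreal (G (cis (2 * pi * t))) \<le> ennreal (G (of_real r * cis (2 * pi * t))) + ennreal e" for t
    proof -
      have "dist (of_real r * cis (2 * pi * t)) (cis (2 * pi * t)) = 1 - r"
      proof -
        have "of_real r * cis (2 * pi * t) - cis (2 * pi * t) = of_real (r - 1) * cis (2 * pi * t)"
          by (simp add: algebra_simps)
        moreover have "cmod (complex_of_real r - 1) = 1 - r"
        proof -
          have "complex_of_real r - 1 = of_real (r - 1)" by simp
          then have "cmod (complex_of_real r - 1) = \<bar>r - 1\<bar>" by (simp only: norm_of_real)
          then show ?thesis using r by simp
        qed
        ultimately show ?thesis by (simp add: dist_norm norm_mult)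
      qed
      then have "dist (G (of_real r * cis (2 * pi * t))) (G (cis (2 * pi * t))) < e"
        using r by (intro dd inball) auto
      then have "G (cis (2 * pi * t)) \<le> G (of_real r * cis (2 * pi * t)) + e"
        by (simp add: dist_real_def)
      then show ?thesis using Gnn e by (simp add: ennreal_plus[symmetric] del: ennreal_plus ennreal_leI)
    qed
    have "Hp_mean p F 1 \<le> (\<integral>\<^sup>+ t. (ennreal (G (of_real r * cis (2 * pi * t))) * indicator {0..1} t + ennreal e * indicator {0..1} t) \<partial>lborel)"
      unfolding mean_eq
      using pt by (intro nn_integral_mono) (auto simp: indicator_def)
    also have "\<dots> = Hp_mean p F r + ennreal e"
    proof -
      have mG[measurable]: "(\<lambda>t. ennreal (G (of_real r * cis (2 * pi * t)))) \<in> borel_measurable borel"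
        using measG[of r] r by simp
      show ?thesis unfolding mean_eq
        by (subst nn_integral_add) (measurable, simp add: nn_integral_cmult_indicator)
    qed
    also have "Hp_mean p F r \<le> Hp_norm_pow p F"
      unfolding Hp_norm_pow_def using r by (intro SUP_upper) auto
    finally show "Hp_mean p F 1 \<le> Hp_norm_pow p F + ennreal e" by (simp add: add_right_mono)
  qed
  have "Hp_mean p F 1 = (\<integral>\<^sup>+ z. ennreal (G z) \<partial>circle_measure)"
  proof -
    have "continuous_on (sphere 0 1) G" by (rule continuous_on_subset[OF cG]) auto
    then have "G \<in> borel_measurable circle_borel"
      unfolding circle_borel_def by (rule borel_measurable_continuous_on_restrict)
    then have mm: "(\<lambda>z. ennreal (G z)) \<in> borel_measurable circle_borel"
      using measurable_compose[OF _ measurable_ennreal] by blast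
    show ?thesis unfolding circle_nn[OF mm] by (simp add: Hp_mean_def G_def)
  qed
  then have "Lq_norm circle_measure p F = enn2real (Hp_mean p F 1) powr (1/p)"
    unfolding Lq_norm_def G_def by simp
  also have "\<dots> \<le> enn2real (Hp_norm_pow p F) powr (1/p)"
    using p fin by (intro powr_mono2 enn2real_mono lower) auto
  finally show "Lq_norm circle_measure p F \<le> Hp_norm p F" unfolding Hp_norm_def .
qed




lemma A2:
  fixes E :: "complex \<Rightarrow> complex"
  assumes p: "p > 0" and q: "q > 0"
    and C0: "\<forall>f. f \<in> Hp p \<and> continuous_on (cball 0 1) f \<longrightarrow> Hp_norm p f \<le> C0 * Lq_norm \<mu> q f"
    and mu: "finite_borel_measure_closed_disc \<mu>" and E: "E holomorphic_on UNIV"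
  shows "Lq_norm circle_measure p E \<le> C0 * Lq_norm (restrict_space \<mu> (sphere 0 1)) q E"
proof -
  have smu: "sets \<mu> = sets (restrict_space borel (cball (0::complex) 1))" and fmu: "finite_measure \<mu>"
    using mu unfolding finite_borel_measure_closed_disc_def by auto
  interpret finite_measure \<mu> by (rule fmu)
  have spmu: "space \<mu> = cball 0 1" using space_restrict_borel[OF smu] .
  note nu = nu_facts[OF mu]
  define F where "F n z = z ^ n * E z" for n z
  have Fh: "F n holomorphic_on UNIV" for n unfolding F_def by (intro holomorphic_intros E)
  have Fc: "continuous_on (cball 0 1) (F n)" for n
    using holomorphic_on_imp_continuous_on[OF Fh] continuous_on_subset by blast
  have Ec: "continuous_on (cball 0 1) E"
    using holomorphic_on_imp_continuous_on[OF E] continuous_on_subset by blast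
  have FHp: "F n \<in> Hp p" for n
    unfolding Hp_def using A1(1)[OF Fc p] Fh holomorphic_on_subset by blast
  have spc: "space circle_measure = sphere 0 1" using space_restrict_borel[OF circle_sets] .
  define X where "X = Lq_norm circle_measure p E"
  have XF: "X = Lq_norm circle_measure p (F n)" for n
  proof -
    have "(\<integral>\<^sup>+ z. ennreal (norm (E z) powr p) \<partial>circle_measure) = (\<integral>\<^sup>+ z. ennreal (norm (F n z) powr p) \<partial>circle_measure)"
      by (rule nn_integral_cong) (simp add: spc F_def norm_mult norm_power)
    then show ?thesis unfolding X_def Lq_norm_def by simp
  qed
  define I where "I n = (\<integral>z. norm (F n z) powr q \<partial>\<mu>)" for n
  define J where "J = (\<integral>z. indicator (sphere 0 1) z *\<^sub>R (norm (E z) powr q) \<partial>\<mu>)"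
  have le: "X \<le> C0 * I n powr (1/q)" for n
  proof -
    have "X \<le> Hp_norm p (F n)" unfolding XF[of n] by (rule A1(2)[OF Fc p])
    also have "\<dots> \<le> C0 * Lq_norm \<mu> q (F n)" using C0 FHp Fc by blast
    also have "Lq_norm \<mu> q (F n) = I n powr (1/q)"
      unfolding I_def by (rule Lq_facts(3)[OF fmu smu _ Fc q]) simp
    finally show ?thesis .
  qed
  have JE: "Lq_norm (restrict_space \<mu> (sphere 0 1)) q E = J powr (1/q)"
  proof -
    have "Lq_norm (restrict_space \<mu> (sphere 0 1)) q E = (\<integral>z. norm (E z) powr q \<partial>restrict_space \<mu> (sphere 0 1)) powr (1/q)"
      by (rule Lq_facts(3)[OF nu(1) nu(2) _ _ q]) (use Ec in \<open>auto intro: continuous_on_subset\<close>)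
    also have "(\<integral>z. norm (E z) powr q \<partial>restrict_space \<mu> (sphere 0 1)) = J"
      unfolding J_def by (rule integral_restrict_space) (use nu(3) in simp)
    finally show ?thesis .
  qed
  have cEq: "continuous_on (cball 0 1) (\<lambda>z. norm (E z) powr q)"
    by (intro continuous_on_powr' continuous_intros Ec) (use q in auto)
  have "compact ((\<lambda>z. norm (E z) powr q) ` cball 0 1)" by (rule compact_continuous_image[OF cEq]) auto
  then obtain B where B: "\<And>z. z \<in> cball 0 1 \<Longrightarrow> norm (norm (E z) powr q) \<le> B"
    by (meson bounded_iff compact_imp_bounded image_eqI)
  have measE: "(\<lambda>z. norm (E z) powr q) \<in> borel_measurable \<mu>"
    using borel_measurable_continuous_on_restrict[OF cEq] measurable_cong_sets[OF smu refl] by blast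
  have measF: "(\<lambda>z. norm (F n z) powr q) \<in> borel_measurable \<mu>" for n
  proof -
    have "continuous_on (cball 0 1) (\<lambda>z. norm (F n z) powr q)"
      by (intro continuous_on_powr' continuous_intros Fc) (use q in auto)
    then show ?thesis
      using borel_measurable_continuous_on_restrict measurable_cong_sets[OF smu refl] by blast
  qed
  have lim: "I \<longlonglongrightarrow> J"
    unfolding I_def J_def
  proof (rule integral_dominated_convergence[where w="\<lambda>_. B"])
    show "(\<lambda>z. indicator (sphere 0 1) z *\<^sub>R norm (E z) powr q) \<in> borel_measurable \<mu>"
      using borel_measurable_scaleR[OF borel_measurable_indicator[OF nu(3)] measE] by simp
    show "\<And>n. (\<lambda>z. norm (F n z) powr q) \<in> borel_measurable \<mu>" by (rule measF)
    show "integrable \<mu> (\<lambda>_. B)" by simp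
    show "AE z in \<mu>. (\<lambda>n. norm (F n z) powr q) \<longlonglongrightarrow> indicator (sphere 0 1) z *\<^sub>R norm (E z) powr q"
    proof (rule AE_I2)
      fix z assume z: "z \<in> space \<mu>"
      show "(\<lambda>n. norm (F n z) powr q) \<longlonglongrightarrow> indicator (sphere 0 1) z *\<^sub>R norm (E z) powr q"
      proof (cases "norm z = 1")
        case True
        then show ?thesis by (simp add: F_def norm_mult norm_power)
      next
        case False
        with z spmu have z1: "norm z < 1" by auto
        have "(\<lambda>n. norm z ^ n * norm (E z)) \<longlonglongrightarrow> 0 * norm (E z)"
          by (intro tendsto_intros LIMSEQ_power_zero) (use z1 in auto)
        then have "(\<lambda>n. (norm z ^ n * norm (E z)) powr q) \<longlonglongrightarrow> 0 powr q"
          by (intro tendsto_powr') (use q in auto)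
        then show ?thesis using False by (simp add: F_def norm_mult norm_power)
      qed
    qed
    show "AE z in \<mu>. norm (norm (F n z) powr q) \<le> B" for n
    proof (rule AE_I2)
      fix z assume z: "z \<in> space \<mu>"
      then have z1: "norm z \<le> 1" using spmu by auto
      have "norm z ^ n * norm (E z) \<le> norm (E z)"
        using z1 by (intro mult_left_le_one_le) (auto intro: power_le_one)
      then have "(norm z ^ n * norm (E z)) powr q \<le> norm (E z) powr q"
        using q by (intro powr_mono2) auto
      also have "\<dots> \<le> B" using B[of z] z spmu by auto
      finally show "norm (norm (F n z) powr q) \<le> B" by (simp add: F_def norm_mult norm_power)
    qed
  qed
  have Inn: "I n \<ge> 0" for n unfolding I_def by (simp add: integral_nonneg)
  have "(\<lambda>n. C0 * I n powr (1/q)) \<longlonglongrightarrow> C0 * J powr (1/q)"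
    by (intro tendsto_intros tendsto_powr' lim) (use q Inn in auto)
  then have "X \<le> C0 * J powr (1/q)"
    by (rule LIMSEQ_le_const) (use le in auto)
  then show ?thesis unfolding X_def JE .
qed




definition bp :: "(complex \<times> nat \<times> nat) list \<Rightarrow> complex \<Rightarrow> complex" where
  "bp L z = (\<Sum>(c,j,k)\<leftarrow>L. c * z ^ j * cnj z ^ k)"

definition ep :: "(complex \<times> nat \<times> nat) list \<Rightarrow> complex \<Rightarrow> complex" where
  "ep L z = (\<Sum>(c,j,k)\<leftarrow>L. if k \<le> j then c * z ^ (j - k) else cnj c * z ^ (k - j))"

fun prodL :: "(complex \<times> nat \<times> nat) list \<Rightarrow> (complex \<times> nat \<times> nat) list \<Rightarrow> (complex \<times> nat \<times> nat) list" where
  "prodL [] M = []"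
| "prodL ((c,j,k) # L) M = map (\<lambda>(d,j',k'). (c * d, j + j', k + k')) M @ prodL L M"

definition cL :: "(complex \<times> nat \<times> nat) list \<Rightarrow> (complex \<times> nat \<times> nat) list" where
  "cL L = map (\<lambda>(c,j,k). (cnj c, k, j)) L"

lemma bp_Nil[simp]: "bp [] z = 0" by (simp add: bp_def)
lemma bp_Cons[simp]: "bp ((c,j,k) # L) z = c * z ^ j * cnj z ^ k + bp L z" by (simp add: bp_def)
lemma bp_append[simp]: "bp (L @ M) z = bp L z + bp M z" by (simp add: bp_def)

lemma bp_map: "bp (map (\<lambda>(d,j',k'). (c * d, j + j', k + k')) M) z = c * z ^ j * cnj z ^ k * bp M z"
  by (induction M) (auto simp: algebra_simps power_add)

lemma bp_prodL: "bp (prodL L M) z = bp L z * bp M z"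
  by (induction L M rule: prodL.induct) (auto simp: bp_map algebra_simps)

lemma bp_cL: "bp (cL L) z = cnj (bp L z)"
  by (induction L) (auto simp: cL_def)

lemma bp_cont: "continuous_on S (bp L)"
proof (induction L)
  case Nil then show ?case by (simp add: bp_def)
next
  case (Cons a L)
  obtain c j k where a: "a = (c,j,k)" by (cases a) auto
  have "bp (a # L) = (\<lambda>z. c * z ^ j * cnj z ^ k + bp L z)" unfolding a by auto
  then show ?case using Cons by (auto intro!: continuous_intros)
qed

lemma ep_hol: "ep L holomorphic_on UNIV"
proof (induction L)
  case Nil then show ?case by (simp add: ep_def)
next
  case (Cons a L)
  obtain c j k where a: "a = (c,j,k)" by (cases a) auto
  have "ep (a # L) = (\<lambda>z. (if k \<le> j then c * z ^ (j - k) else cnj c * z ^ (k - j)) + ep L z)"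
    unfolding a by (auto simp: ep_def)
  then show ?case using Cons by (cases "k \<le> j") (auto intro!: holomorphic_intros)
qed

lemma term_circle:
  assumes z: "norm z = 1"
  shows "Re (c * z ^ j * cnj z ^ k) = Re (if k \<le> j then c * z ^ (j - k) else cnj c * z ^ (k - j))"
proof -
  have zz: "z * cnj z = 1" using z by (simp add: complex_mult_cnj complex_eq_iff power2_eq_square norm_complex_def)
  show ?thesis
  proof (cases "k \<le> j")
    case True
    then have "z ^ j = z ^ (j - k) * z ^ k" by (simp flip: power_add)
    then have "c * z ^ j * cnj z ^ k = c * z ^ (j - k) * (z * cnj z) ^ k" by (simp add: power_mult_distrib)
    then have eq: "c * z ^ j * cnj z ^ k = c * z ^ (j - k)" using zz by simp
    show ?thesis using True by (subst eq) simp
  next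
    case False
    then have "cnj z ^ k = cnj z ^ (k - j) * cnj z ^ j" by (simp flip: power_add)
    then have "c * z ^ j * cnj z ^ k = c * cnj (z ^ (k - j)) * (z * cnj z) ^ j" by (simp add: power_mult_distrib)
    then have eq: "c * z ^ j * cnj z ^ k = cnj (cnj c * z ^ (k - j))" using zz by simp
    have rc: "Re (cnj w) = Re w" for w by simp
    show ?thesis using False by (simp only: eq rc if_False)
  qed
qed

lemma bp_ep: "norm z = 1 \<Longrightarrow> Re (bp L z) = Re (ep L z)"
proof (induction L)
  case Nil then show ?case by (simp add: ep_def)
next
  case (Cons a L)
  obtain c j k where a: "a = (c,j,k)" by (cases a) auto
  show ?case using Cons term_circle[OF Cons.prems, of c j k] unfolding a by (simp add: ep_def)
qed

lemma approx_Re: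
  assumes h: "continuous_on (sphere 0 1) h" and e: "e > 0"
  shows "\<exists>Q. Q holomorphic_on UNIV \<and> (\<forall>z\<in>sphere 0 1. \<bar>h z - Re (Q z)\<bar> < e)"
proof -
  define R where "R = {u. \<exists>L. u = (\<lambda>z. Re (bp L z))}"
  interpret function_ring_on R "sphere (0::complex) 1"
  proof
    show "compact (sphere (0::complex) 1)" by simp
    show "continuous_on (sphere 0 1) f" if "f \<in> R" for f
      using that unfolding R_def by (auto intro!: continuous_intros bp_cont)
    show "(\<lambda>x. f x + g x) \<in> R" if "f \<in> R" "g \<in> R" for f g
    proof -
      from that obtain L M where "f = (\<lambda>z. Re (bp L z))" "g = (\<lambda>z. Re (bp M z))" unfolding R_def by auto
      then have "(\<lambda>x. f x + g x) = (\<lambda>z. Re (bp (L @ M) z))" by auto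
      then show ?thesis unfolding R_def by blast
    qed
    show "(\<lambda>x. f x * g x) \<in> R" if "f \<in> R" "g \<in> R" for f g
    proof -
      from that obtain L M where fg: "f = (\<lambda>z. Re (bp L z))" "g = (\<lambda>z. Re (bp M z))" unfolding R_def by auto
      have "(\<lambda>x. f x * g x) = (\<lambda>z. Re (bp (prodL [(1/2,0,0)] (prodL L M @ prodL L (cL M))) z))"
      proof
        fix z
        show "f z * g z = Re (bp (prodL [(1/2,0,0)] (prodL L M @ prodL L (cL M))) z)"
          unfolding fg bp_prodL bp_append bp_cL by (simp add: algebra_simps) (simp add: field_simps)
      qed
      then show ?thesis unfolding R_def by blast
    qed
    show "(\<lambda>_. c) \<in> R" for c
    proof -
      have "(\<lambda>_. c) = (\<lambda>z. Re (bp [(of_real c, 0, 0)] z))" by auto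
      then show ?thesis unfolding R_def by blast
    qed
    show "\<exists>f\<in>R. f x \<noteq> f y" if "x \<noteq> y" for x y
    proof -
      have r1: "(\<lambda>z. Re z) \<in> R"
      proof -
        have "(\<lambda>z. Re z) = (\<lambda>z. Re (bp [(1, 1, 0)] z))" by auto
        then show ?thesis unfolding R_def by blast
      qed
      have r2: "(\<lambda>z. Im z) \<in> R"
      proof -
        have "(\<lambda>z. Im z) = (\<lambda>z. Re (bp [(- \<i>, 1, 0)] z))" by auto
        then show ?thesis unfolding R_def by blast
      qed
      from that have "Re x \<noteq> Re y \<or> Im x \<noteq> Im y" by (simp add: complex_eq_iff)
      then show ?thesis using r1 r2 by blast
    qed
  qed
  obtain g where g: "g \<in> R" "\<forall>x\<in>sphere 0 1. \<bar>h x - g x\<bar> < e"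
    using Stone_Weierstrass_basic[OF h e] by blast
  then obtain L where L: "g = (\<lambda>z. Re (bp L z))" unfolding R_def by auto
  show ?thesis
    by (rule exI[of _ "ep L"]) (use g L ep_hol bp_ep in auto)
qed




lemma Lq_mono:
  fixes f g :: "complex \<Rightarrow> complex"
  assumes M: "finite_measure M" and sM: "sets M = sets (restrict_space borel (sphere 0 1))"
    and f: "continuous_on (sphere 0 1) f" and g: "continuous_on (sphere 0 1) g"
    and c: "c \<ge> 0" and q: "q > 0"
    and le: "\<And>z. z \<in> sphere 0 1 \<Longrightarrow> norm (f z) \<le> c * norm (g z)"
  shows "Lq_norm M q f \<le> c * Lq_norm M q g"
proof -
  have sp: "space M = sphere 0 1" using space_restrict_borel[OF sM] .
  note F = Lq_facts[OF M sM _ f q, simplified] and G = Lq_facts[OF M sM _ g q, simplified]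
  have "(\<integral>z. norm (f z) powr q \<partial>M) \<le> (\<integral>z. c powr q * norm (g z) powr q \<partial>M)"
  proof (rule integral_mono)
    show "integrable M (\<lambda>z. norm (f z) powr q)" by (rule F(1))
    show "integrable M (\<lambda>z. c powr q * norm (g z) powr q)" using G(1) by simp
    fix z assume "z \<in> space M"
    then have "norm (f z) powr q \<le> (c * norm (g z)) powr q"
      using le sp q by (intro powr_mono2) auto
    then show "norm (f z) powr q \<le> c powr q * norm (g z) powr q" by (simp add: powr_mult)
  qed
  then have "(\<integral>z. norm (f z) powr q \<partial>M) powr (1/q) \<le> (c powr q * (\<integral>z. norm (g z) powr q \<partial>M)) powr (1/q)"
    using q by (intro powr_mono2) (auto simp: integral_nonneg)
  also have "\<dots> = c * (\<integral>z. norm (g z) powr q \<partial>M) powr (1/q)"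
    using q c by (simp add: powr_mult powr_powr)
  finally show ?thesis using F(3) G(3) by simp
qed

lemma sum_pow_bound:
  fixes a d q :: real
  assumes "a \<ge> 0" "d \<ge> 0" "q > 0"
  shows "(a + d) powr q \<le> 2 powr q * (a powr q + d powr q)"
proof -
  have "(a + d) powr q \<le> (2 * max a d) powr q" using assms by (intro powr_mono2) auto
  also have "\<dots> = 2 powr q * max a d powr q" by (simp add: powr_mult)
  also have "max a d powr q \<le> a powr q + d powr q"
    by (cases "a \<le> d") (auto simp: max_def)
  finally show ?thesis by (simp add: mult_left_mono)
qed

theorem lemma3p2:
  fixes p q :: real and \<mu> :: "complex measure"
  assumes "0 < p" and "0 < q"
    and "reverse_carleson_Hp p q \<mu>"
  shows "\<exists>C>0. \<forall>f :: complex \<Rightarrow> complex. continuous_on (sphere 0 1) f \<longrightarrow>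
           Lq_norm circle_measure p f \<le> C * Lq_norm (restrict_space \<mu> (sphere 0 1)) q f"
proof -
  note p = \<open>0 < p\<close> and q = \<open>0 < q\<close>
  from assms(3) obtain C0 where C0pos: "C0 > 0" and mu: "finite_borel_measure_closed_disc \<mu>"
    and C0: "\<forall>f. f \<in> Hp p \<and> continuous_on (cball 0 1) f \<longrightarrow> Hp_norm p f \<le> C0 * Lq_norm \<mu> q f"
    unfolding reverse_carleson_Hp_def by blast
  note nu = nu_facts[OF mu]
  define \<nu> where "\<nu> = restrict_space \<mu> (sphere 0 1)"
  have fnu: "finite_measure \<nu>" and snu: "sets \<nu> = sets (restrict_space borel (sphere 0 1))"
    using nu unfolding \<nu>_def by auto
  have spnu: "space \<nu> = sphere 0 1" using space_restrict_borel[OF snu] .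
  define A where "A = exp 1 * (exp 1 * C0)"
  have Apos: "A > 0" using C0pos by (simp add: A_def)
  show ?thesis
  proof (intro exI[of _ "A * 2"] conjI allI impI)
    show "A * 2 > 0" using Apos by simp
    fix f :: "complex \<Rightarrow> complex" assume f: "continuous_on (sphere 0 1) f"
    define L where "L = Lq_norm circle_measure p f"
    define gd where "gd d z = complex_of_real (norm (f z) + d)" for d z
    have gdc: "continuous_on (sphere 0 1) (gd d)" for d unfolding gd_def by (intro continuous_intros f)
    have ngd: "norm (gd d z) = norm (f z) + d" if "d \<ge> 0" for d z
    proof -
      have "norm (gd d z) = \<bar>norm (f z) + d\<bar>" unfolding gd_def by (simp only: norm_of_real)
      then show ?thesis using that by simp
    qed
    have step1: "L \<le> A * Lq_norm \<nu> q (gd d)" if d: "d > 0" for d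
    proof -
      have hc: "continuous_on (sphere 0 1) (\<lambda>z. p * ln (norm (f z) + d))"
      proof -
        have "norm (f z) + d \<noteq> 0" for z using d by (metis add_nonneg_pos norm_ge_zero less_irrefl)
        then show ?thesis by (intro continuous_intros f) auto
      qed
      obtain Q where Q: "Q holomorphic_on UNIV" and Qa: "\<forall>z\<in>sphere 0 1. \<bar>p * ln (norm (f z) + d) - Re (Q z)\<bar> < p"
        using approx_Re[OF hc p] by blast
      define E where "E z = exp (Q z / of_real p)" for z
      have Eh: "E holomorphic_on UNIV" unfolding E_def by (intro holomorphic_intros Q) (use p in auto)
      have Ec: "continuous_on (sphere 0 1) E"
        using holomorphic_on_imp_continuous_on[OF Eh] continuous_on_subset by blast
      have nE: "norm (E z) = exp (Re (Q z) / p)" for z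
      proof -
        have "Re (Q z / of_real p) = Re (Q z) / p" by simp
        then show ?thesis unfolding E_def by simp
      qed
      have bnd: "\<bar>ln (norm (f z) + d) - Re (Q z) / p\<bar> < 1" if "z \<in> sphere 0 1" for z
      proof -
        have "\<bar>p * (ln (norm (f z) + d) - Re (Q z) / p)\<bar> < p" using Qa that p by (simp add: algebra_simps)
        then show ?thesis using p by (simp add: abs_mult)
      qed
      have b1: "norm (gd d z) \<le> exp 1 * norm (E z)" if "z \<in> sphere 0 1" for z
      proof -
        have pos: "norm (f z) + d > 0" using d by (simp add: add_nonneg_pos)
        have "ln (norm (f z) + d) \<le> 1 + Re (Q z) / p" using bnd[OF that] by linarith
        then have "exp (ln (norm (f z) + d)) \<le> exp (1 + Re (Q z) / p)" by simp
        then show ?thesis using pos d by (simp add: ngd nE exp_add)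
      qed
      have b2: "norm (E z) \<le> exp 1 * norm (gd d z)" if "z \<in> sphere 0 1" for z
      proof -
        have pos: "norm (f z) + d > 0" using d by (simp add: add_nonneg_pos)
        have "Re (Q z) / p \<le> 1 + ln (norm (f z) + d)" using bnd[OF that] by linarith
        then have "exp (Re (Q z) / p) \<le> exp (1 + ln (norm (f z) + d))" by simp
        then show ?thesis using pos d by (simp add: ngd nE exp_add)
      qed
      have "L \<le> 1 * Lq_norm circle_measure p (gd d)"
        unfolding L_def
        by (rule Lq_mono[OF circle_finite circle_sets f gdc _ p]) (use d in \<open>auto simp: ngd\<close>)
      also have "\<dots> \<le> exp 1 * Lq_norm circle_measure p E"
        using Lq_mono[OF circle_finite circle_sets gdc Ec _ p b1] by simp
      also have "Lq_norm circle_measure p E \<le> C0 * Lq_norm \<nu> q E"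
        unfolding \<nu>_def by (rule A2[OF p q C0 mu Eh])
      also have "Lq_norm \<nu> q E \<le> exp 1 * Lq_norm \<nu> q (gd d)"
        by (rule Lq_mono[OF fnu snu Ec gdc _ q b2]) simp
      finally show ?thesis using C0pos by (simp add: A_def mult_left_mono mult.assoc mult.left_commute)
    qed
    define I where "I = (\<integral>z. norm (f z) powr q \<partial>\<nu>)"
    define V where "V = measure \<nu> (space \<nu>)"
    have Inn: "I \<ge> 0" unfolding I_def by (simp add: integral_nonneg)
    have Vnn: "V \<ge> 0" unfolding V_def by simp
    note Ff = Lq_facts[OF fnu snu _ f q, simplified]
    have step2: "Lq_norm \<nu> q (gd d) \<le> (2 powr q * (I + d powr q * V)) powr (1/q)" if d: "d > 0" for d
    proof -
      note G = Lq_facts[OF fnu snu _ gdc q, simplified]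
      interpret finite_measure \<nu> by (rule fnu)
      have "(\<integral>z. norm (gd d z) powr q \<partial>\<nu>) \<le> (\<integral>z. 2 powr q * (norm (f z) powr q + d powr q) \<partial>\<nu>)"
      proof (rule integral_mono)
        show "integrable \<nu> (\<lambda>z. norm (gd d z) powr q)" by (rule G(1))
        show "integrable \<nu> (\<lambda>z. 2 powr q * (norm (f z) powr q + d powr q))"
          using Ff(1) by (intro integrable_mult_right Bochner_Integration.integrable_add) auto
        fix z show "norm (gd d z) powr q \<le> 2 powr q * (norm (f z) powr q + d powr q)"
          using d q by (simp add: ngd sum_pow_bound)
      qed
      also have "\<dots> = 2 powr q * (I + d powr q * V)"
        unfolding I_def V_def using Ff(1)
        by (subst integral_mult_right_zero, subst Bochner_Integration.integral_add) (auto simp: mult.commute)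
      finally show ?thesis unfolding G(3) using q by (intro powr_mono2) (auto simp: integral_nonneg)
    qed
    have seq: "L \<le> A * (2 powr q * (I + 1 / (real n + 1))) powr (1/q)" for n
    proof -
      define \<eta> where "\<eta> = 1 / (real n + 1)"
      have eta: "\<eta> > 0" unfolding \<eta>_def by simp
      define d where "d = (\<eta> / (V + 1)) powr (1/q)"
      have dpos: "d > 0" unfolding d_def using eta Vnn by simp
      have dq: "d powr q = \<eta> / (V + 1)" unfolding d_def using q eta Vnn by (simp add: powr_powr)
      have "d powr q * V \<le> \<eta>" unfolding dq using eta Vnn by (simp add: field_simps)
      then have "(2 powr q * (I + d powr q * V)) powr (1/q) \<le> (2 powr q * (I + \<eta>)) powr (1/q)"
        using q Inn Vnn by (intro powr_mono2) auto
      then have "L \<le> A * (2 powr q * (I + \<eta>)) powr (1/q)"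
        using step1[OF dpos] step2[OF dpos] Apos
        by (meson mult_left_mono less_imp_le order_trans)
      then show ?thesis unfolding \<eta>_def .
    qed
    have lim0: "(\<lambda>n. 1 / (real n + 1)) \<longlonglongrightarrow> 0"
      using LIMSEQ_inverse_real_of_nat by (simp add: inverse_eq_divide add.commute)
    have "(\<lambda>n. A * (2 powr q * (I + 1 / (real n + 1))) powr (1/q)) \<longlonglongrightarrow> A * (2 powr q * (I + 0)) powr (1/q)"
      by (intro tendsto_intros tendsto_powr' lim0)
         (use q Inn in \<open>auto intro!: always_eventually\<close>)
    then have "L \<le> A * (2 powr q * (I + 0)) powr (1/q)"
      by (rule LIMSEQ_le_const) (use seq in auto)
    also have "(2 powr q * (I + 0)) powr (1/q) = 2 * I powr (1/q)"
      using q by (simp add: powr_mult powr_powr)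
    also have "I powr (1/q) = Lq_norm \<nu> q f" unfolding I_def using Ff(3) by simp
    finally show "Lq_norm circle_measure p f \<le> A * 2 * Lq_norm (restrict_space \<mu> (sphere 0 1)) q f"
      unfolding L_def \<nu>_def by (simp add: mult.assoc)
  qed
qed


end
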